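(* For $n\ge1$ let $M_n\in\mathbb R^{n\times n}$ be the matrix with entries $(M_n)_{ij}=(i-j)^2$. Then $\operatorname{st}_+(M_n)\le\lceil n/2\rceil+2$.
   Context: The SNT-rank $\operatorname{st}_+(A)$ of a symmetric entrywise nonnegative $n\times n$ matrix $A$ is the minimal $k$ such that $A=BCB^T$ with $B$ an entrywise nonnegative $n\times k$ matrix and $C$ a symmetric entrywise nonnegative $k\times k$ matrix. *)

theory Defs
  imports Complex_Main
begin

text \<open>An n x n real matrix is represented as a function nat => nat => real;
  only entries with indices < n are relevant. Indices are 0-based.\<close>

definition snt_factorization :: "nat \<Rightarrow> (nat \<Rightarrow> nat \<Rightarrow> real) \<Rightarrow> nat \<Rightarrow> bool" where
  "snt_factorization n A k \<longleftrightarrow>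
     (\<exists>B C :: nat \<Rightarrow> nat \<Rightarrow> real.
        (\<forall>i<n. \<forall>a<k. 0 \<le> B i a) \<and>
        (\<forall>a<k. \<forall>b<k. 0 \<le> C a b \<and> C a b = C b a) \<and>
        (\<forall>i<n. \<forall>j<n. A i j = (\<Sum>a<k. \<Sum>b<k. B i a * C a b * B j b)))"

definition snt_rank :: "nat \<Rightarrow> (nat \<Rightarrow> nat \<Rightarrow> real) \<Rightarrow> nat" where
  "snt_rank n A = (LEAST k. snt_factorization n A k)"

end

theory Submission
  imports Defs
begin

lemma sum_split2: "(\<Sum>a<m+2. h a) = (\<Sum>a<m. h a) + h m + h (Suc m)" for h :: "nat \<Rightarrow> real"
  by (simp add: numeral_2_eq_2)

lemma sum_ind: "p < (m::nat) \<Longrightarrow> (\<Sum>a<m. (if a = p then 1 else 0) * X a) = (X p :: real)"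
proof -
  assume "p < m"
  have "(\<Sum>a<m. (if a = p then 1 else 0) * X a) = (\<Sum>a<m. if a = p then X a else 0)"
    by (rule sum.cong) auto
  also have "\<dots> = X p" using \<open>p<m\<close> by (simp add: sum.delta'[where b=X])
  finally show ?thesis .
qed

theorem mainTheorem9:
  fixes n :: nat
  assumes "n \<ge> 1"
  shows "snt_rank n (\<lambda>i j. (real i - real j)^2) \<le> nat \<lceil>real n / 2\<rceil> + 2"
proof -
  define m where "m = nat \<lceil>real n / 2\<rceil>"
  define c where "c = (real n - 1) / 2"
  define P where "P i = min i (n - 1 - i)" for i :: nat
  define y where "y i = (if real i < c then c - real i else 0)" for i :: nat
  define z where "z i = (if real i > c then real i - c else 0)" for i :: nat
  define g where "g p = c - real p" for p :: nat
  define B where "B i a = (if a < m then (if a = P i then 1 else 0)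
      else if a = m then y i else if a = Suc m then z i else 0)" for i a :: nat
  define C where "C a b = (if a < m \<and> b < m then (g a - g b)^2
      else if (a = m \<and> b = Suc m) \<or> (a = Suc m \<and> b = m) then 4 else (0::real))" for a b :: nat
  have Pm: "P i < m" if "i < n" for i
  proof -
    have "real (P i) \<le> (real n - 1) / 2" using that unfolding P_def by (auto simp: min_def)
    moreover have "real n / 2 \<le> real m" unfolding m_def by linarith
    ultimately have "real (P i) < real m" by (simp add: field_simps)
    then show ?thesis by simp
  qed
  have gP: "g (P i) = \<bar>real i - c\<bar>" if "i < n" for i
    using that unfolding g_def P_def c_def by (auto simp: min_def of_nat_diff field_simps)
  have inner: "(\<Sum>b<m+2. C a b * B j b) =
      (if a < m then C a (P j) else if a = m then 4 * z j else if a = Suc m then 4 * y j else 0)"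
    if "j < n" for a j
  proof -
    have "(\<Sum>b<m+2. C a b * B j b) = (\<Sum>b<m. C a b * B j b) + C a m * B j m + C a (Suc m) * B j (Suc m)"
      by (rule sum_split2)
    also have "(\<Sum>b<m. C a b * B j b) = (\<Sum>b<m. (if b = P j then 1 else 0) * C a b)"
      by (rule sum.cong) (auto simp: B_def)
    also have "\<dots> = C a (P j)" using Pm[OF that] by (rule sum_ind)
    finally show ?thesis by (auto simp: C_def B_def)
  qed
  have main: "(real i - real j)^2 = (\<Sum>a<m+2. \<Sum>b<m+2. B i a * C a b * B j b)"
    if "i < n" "j < n" for i j
  proof -
    have "(\<Sum>a<m+2. \<Sum>b<m+2. B i a * C a b * B j b) = (\<Sum>a<m+2. B i a *
      (if a < m then C a (P j) else if a = m then 4 * z j else if a = Suc m then 4 * y j else 0))"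
      by (rule sum.cong) (auto simp: inner[OF that(2), symmetric] sum_distrib_left mult.assoc distrib_left)
    also have "\<dots> = (\<Sum>a<m. B i a *
      (if a < m then C a (P j) else if a = m then 4 * z j else if a = Suc m then 4 * y j else 0))
      + y i * (4 * z j) + z i * (4 * y j)"
      by (subst sum_split2) (simp add: B_def)
    also have "(\<Sum>a<m. B i a *
      (if a < m then C a (P j) else if a = m then 4 * z j else if a = Suc m then 4 * y j else 0))
      = (\<Sum>a<m. (if a = P i then 1 else 0) * C a (P j))"
      by (rule sum.cong) (auto simp: B_def)
    also have "\<dots> = C (P i) (P j)" using Pm[OF that(1)] by (rule sum_ind)
    also have "C (P i) (P j) = (\<bar>real i - c\<bar> - \<bar>real j - c\<bar>)^2"
      using Pm[OF that(1)] Pm[OF that(2)] gP[OF that(1)] gP[OF that(2)] by (simp add: C_def)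
    finally have eq: "(\<Sum>a<m+2. \<Sum>b<m+2. B i a * C a b * B j b) =
      (\<bar>real i - c\<bar> - \<bar>real j - c\<bar>)^2 + y i * (4 * z j) + z i * (4 * y j)" .
    have "(real i - real j)^2 = (\<bar>real i - c\<bar> - \<bar>real j - c\<bar>)^2 + y i * (4 * z j) + z i * (4 * y j)"
      by (auto simp: y_def z_def abs_if power2_eq_square algebra_simps)
    then show ?thesis unfolding eq .

  qed
  have f1: "\<forall>i<n. \<forall>a<m+2. 0 \<le> B i a" by (auto simp: B_def y_def z_def)
  have f2: "\<forall>a<m+2. \<forall>b<m+2. 0 \<le> C a b \<and> C a b = C b a" by (auto simp: C_def power2_commute)
  have f3: "\<forall>i<n. \<forall>j<n. (real i - real j)^2 = (\<Sum>a<m+2. \<Sum>b<m+2. B i a * C a b * B j b)"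
      using main by blast
  have "snt_factorization n (\<lambda>i j. (real i - real j)^2) (m+2)"
    unfolding snt_factorization_def using f1 f2 f3 by blast
  then show ?thesis unfolding snt_rank_def m_def[symmetric] by (rule Least_le)
qed

end
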